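(* Let $G$ be a finite group and let $A, B\subseteq G$ be subsets such that the multiplication map $A\times B\to G$, $(a,b)\mapsto ab$, is a bijection. Then the order of the subgroup of $G$ generated by $A$ is a multiple of $\mathrm{card}(A)$, and the order of the subgroup of $G$ generated by $B$ is a multiple of $\mathrm{card}(B)$. *)

theory Defs
  imports "HOL-Algebra.Algebra"
begin

end

theory Submission
  imports Defs
begin

lemma left_part:
  fixes G (structure) and A B H :: "'a set"
  assumes "group G" and "A \<subseteq> carrier G" and "B \<subseteq> carrier G"
    and bij: "bij_betw (\<lambda>(a, b). a \<otimes> b) (A \<times> B) (carrier G)"
    and H: "subgroup H G" and AH: "A \<subseteq> H"
  shows "card H = card A * card (B \<inter> H)"
proof -
  interpret group G by fact
  have "bij_betw (\<lambda>(a, b). a \<otimes> b) (A \<times> (B \<inter> H)) H"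
    unfolding bij_betw_def
  proof
    show "inj_on (\<lambda>(a, b). a \<otimes> b) (A \<times> (B \<inter> H))"
      using bij unfolding bij_betw_def by (rule inj_on_subset[OF conjunct1]) blast
    show "(\<lambda>(a, b). a \<otimes> b) ` (A \<times> (B \<inter> H)) = H"
    proof
      show "(\<lambda>(a, b). a \<otimes> b) ` (A \<times> (B \<inter> H)) \<subseteq> H"
        using AH H by (auto intro: subgroup.m_closed)
      show "H \<subseteq> (\<lambda>(a, b). a \<otimes> b) ` (A \<times> (B \<inter> H))"
      proof
        fix g assume g: "g \<in> H"
        then have "g \<in> carrier G" using H subgroup.subset by blast
        then have "g \<in> (\<lambda>(a, b). a \<otimes> b) ` (A \<times> B)"
          using bij by (simp add: bij_betw_def)
        then obtain a b where ab: "a \<in> A" "b \<in> B" "g = a \<otimes> b"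
          by auto
        have aG: "a \<in> carrier G" "b \<in> carrier G" using ab assms(2,3) by auto
        have "b = inv a \<otimes> g" using ab aG by (simp add: m_assoc[symmetric] l_inv)
        moreover have "inv a \<otimes> g \<in> H" using ab AH g H
          by (meson subgroup.m_closed subgroup.m_inv_closed subsetD)
        ultimately show "g \<in> (\<lambda>(a, b). a \<otimes> b) ` (A \<times> (B \<inter> H))"
          using ab by (intro image_eqI[of _ _ "(a, b)"]) auto
      qed
    qed
  qed
  then have "card H = card (A \<times> (B \<inter> H))" by (simp add: bij_betw_same_card)
  then show ?thesis by (simp add: card_cartesian_product)
qed

lemma right_part:
  fixes G (structure) and A B H :: "'a set"
  assumes "group G" and "A \<subseteq> carrier G" and "B \<subseteq> carrier G"
    and bij: "bij_betw (\<lambda>(a, b). a \<otimes> b) (A \<times> B) (carrier G)"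
    and H: "subgroup H G" and BH: "B \<subseteq> H"
  shows "card H = card (A \<inter> H) * card B"
proof -
  interpret group G by fact
  have "bij_betw (\<lambda>(a, b). a \<otimes> b) ((A \<inter> H) \<times> B) H"
    unfolding bij_betw_def
  proof
    show "inj_on (\<lambda>(a, b). a \<otimes> b) ((A \<inter> H) \<times> B)"
      using bij unfolding bij_betw_def by (rule inj_on_subset[OF conjunct1]) blast
    show "(\<lambda>(a, b). a \<otimes> b) ` ((A \<inter> H) \<times> B) = H"
    proof
      show "(\<lambda>(a, b). a \<otimes> b) ` ((A \<inter> H) \<times> B) \<subseteq> H"
        using BH H by (auto intro: subgroup.m_closed)
      show "H \<subseteq> (\<lambda>(a, b). a \<otimes> b) ` ((A \<inter> H) \<times> B)"
      proof
        fix g assume g: "g \<in> H"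
        then have "g \<in> carrier G" using H subgroup.subset by blast
        then have "g \<in> (\<lambda>(a, b). a \<otimes> b) ` (A \<times> B)"
          using bij by (simp add: bij_betw_def)
        then obtain a b where ab: "a \<in> A" "b \<in> B" "g = a \<otimes> b"
          by auto
        have aG: "a \<in> carrier G" "b \<in> carrier G" using ab assms(2,3) by auto
        have "a = g \<otimes> inv b" using ab aG by (simp add: m_assoc r_inv)
        moreover have "g \<otimes> inv b \<in> H" using ab BH g H
          by (meson subgroup.m_closed subgroup.m_inv_closed subsetD)
        ultimately show "g \<in> (\<lambda>(a, b). a \<otimes> b) ` ((A \<inter> H) \<times> B)"
          using ab by (intro image_eqI[of _ _ "(a, b)"]) auto
      qed
    qed
  qed
  then have "card H = card ((A \<inter> H) \<times> B)" by (simp add: bij_betw_same_card)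
  then show ?thesis by (simp add: card_cartesian_product)
qed

theorem lemma1p1:
  fixes G (structure) and A B :: "'a set"
  assumes "group G" and "finite (carrier G)"
    and "A \<subseteq> carrier G" and "B \<subseteq> carrier G"
    and "bij_betw (\<lambda>(a, b). a \<otimes> b) (A \<times> B) (carrier G)"
  shows "card A dvd card (generate G A) \<and> card B dvd card (generate G B)"
proof
  have sA: "subgroup (generate G A) G" using assms group.generate_is_subgroup by blast
  have sB: "subgroup (generate G B) G" using assms group.generate_is_subgroup by blast
  have iA: "A \<subseteq> generate G A" by (auto intro: generate.incl)
  have iB: "B \<subseteq> generate G B" by (auto intro: generate.incl)
  show "card A dvd card (generate G A)"
    using left_part[OF assms(1,3,4,5) sA iA] by simp
  show "card B dvd card (generate G B)"
    using right_part[OF assms(1,3,4,5) sB iB] by simp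
qed

end
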